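(* Let $n,k$ be integers with $3 \le k < n$, and consider the oriented $(n,k)$-star graph $\overrightarrow{S_{n,k}}$ with the clique-edge orientation described in the context. Let $v$ be a vertex and let $Q(v)$ be the oriented fundamental clique containing $v$. Let $n_E$ and $n_O$ denote the numbers of even-signed and odd-signed vertices in $Q(v)$. Then $n_E = n_O$ when $n-k$ is odd, and $|n_E - n_O| = 1$ when $n-k$ is even. Furthermore, $v$ has at least $\left\lfloor \frac{n-k}{2}\right\rfloor$ out-neighbours in $Q(v)$.
   Context: For integers $1 \le k < n$, the $(n,k)$-star graph $S_{n,k}$ has as vertices the $k$-permutations $u_1u_2\cdots u_k$ of $\{1,\dots,n\}$ (sequences of $k$ distinct elements). The clique neighbours of $u_1u_2\cdots u_k$ are the vertices $xu_2\cdots u_k$ with $x\in\{1,\dots,n\}\setminus\{u_1,\dots,u_k\}$; a vertex together with its clique neighbours forms a complete subgraph on $n-k+1$ vertices, called its fundamental clique (its edges are clique edges). (There are also star edges, joining $u_1\cdots u_k$ to the vertex obtained by swapping $u_1$ and $u_i$, $2\le i\le k$, but they play no role here.) The extended permutation label of a vertex $u = u_1\cdots u_k$ is the permutation $\sigma_u = u_1u_2\cdots u_k u_{k+1}\cdots u_n$ of $\{1,\dots,n\}$, where $u_{k+1}<u_{k+2}<\cdots<u_n$ is the increasing listing of $\{1,\dots,n\}\setminus\{u_1,\dots,u_k\}$. A vertex is even-signed (odd-signed) if $\sigma_u$ has an even (odd) number of inversions. Orientation of clique edges: for a clique edge $\{u,w\}$, if $\sigma_u$ and $\sigma_w$ have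 the same sign, the edge is directed from $u$ to $w$ iff $\sigma_u(1) > \sigma_w(1)$; if they have opposite signs, the edge is directed from $u$ to $w$ iff $\sigma_u(1) < \sigma_w(1)$. The oriented fundamental clique $Q(v)$ is the fundamental clique of $v$ with this orientation. *)

theory Defs
  imports Main
begin

definition star_vertex :: "nat \<Rightarrow> nat \<Rightarrow> nat list \<Rightarrow> bool" where
  "star_vertex n k u \<longleftrightarrow> length u = k \<and> distinct u \<and> set u \<subseteq> {1..n}"

text \<open>Extended permutation label sigma_u (as a list; sigma_u(1) is its head).\<close>
definition ext_label :: "nat \<Rightarrow> nat list \<Rightarrow> nat list" where
  "ext_label n u = u @ sorted_list_of_set ({1..n} - set u)"

definition inversions :: "nat list \<Rightarrow> nat" where
  "inversions xs = card {(i, j). i < j \<and> j < length xs \<and> xs ! i > xs ! j}"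

definition even_signed :: "nat \<Rightarrow> nat list \<Rightarrow> bool" where
  "even_signed n u \<longleftrightarrow> even (inversions (ext_label n u))"

definition fund_clique :: "nat \<Rightarrow> nat list \<Rightarrow> nat list set" where
  "fund_clique n u = {x # tl u | x. x \<in> {1..n} \<and> x \<notin> set (tl u)}"

definition clique_arc :: "nat \<Rightarrow> nat list \<Rightarrow> nat list \<Rightarrow> bool" where
  "clique_arc n u w \<longleftrightarrow>
     (if even_signed n u = even_signed n w
      then hd (ext_label n u) > hd (ext_label n w)
      else hd (ext_label n u) < hd (ext_label n w))"

definition out_nbrs_in_clique :: "nat \<Rightarrow> nat list \<Rightarrow> nat list set" where
  "out_nbrs_in_clique n v = {w \<in> fund_clique n v. w \<noteq> v \<and> clique_arc n v w}"

end

theory Submission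
  imports Defs
begin

fun invc :: "nat list \<Rightarrow> nat" where
  "invc [] = 0"
| "invc (x # ys) = length (filter (\<lambda>y. y < x) ys) + invc ys"

lemma inversions_Cons: "inversions (x # ys) = length (filter (\<lambda>y. y < x) ys) + inversions ys"
proof -
  let ?A = "(\<lambda>j. (0::nat, Suc j)) ` {j. j < length ys \<and> ys ! j < x}"
  let ?B = "(\<lambda>(i,j). (Suc i, Suc j)) ` {(i, j). i < j \<and> j < length ys \<and> ys ! i > ys ! j}"
  have eq: "{(i, j). i < j \<and> j < length (x # ys) \<and> (x # ys) ! i > (x # ys) ! j} = ?A \<union> ?B"
  proof (rule set_eqI, clarify)
    fix i j
    show "((i, j) \<in> {(i, j). i < j \<and> j < length (x # ys) \<and> (x # ys) ! i > (x # ys) ! j}) = ((i, j) \<in> ?A \<union> ?B)"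
      by (cases i; cases j) (auto simp: image_iff)
  qed
  have fA: "finite ?A" by simp
  have fB: "finite ?B"
    by (rule finite_imageI, rule finite_subset[of _ "{..<length ys} \<times> {..<length ys}"]) auto
  have d: "?A \<inter> ?B = {}" by auto
  have cA: "card ?A = length (filter (\<lambda>y. y < x) ys)"
    by (subst card_image) (auto simp: inj_on_def length_filter_conv_card)
  have cB: "card ?B = inversions ys"
    unfolding inversions_def by (subst card_image) (auto simp: inj_on_def)
  show ?thesis unfolding inversions_def[of "x # ys"] eq
    using card_Un_disjoint[OF fA fB d] cA cB by simp
qed

lemma inversions_invc: "inversions xs = invc xs"
  by (induction xs) (simp_all add: inversions_Cons, simp add: inversions_def)

lemma invc_append: "invc (xs @ ys) = invc xs + (\<Sum>a\<leftarrow>xs. length (filter (\<lambda>y. y < a) ys)) + invc ys"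
  by (induction xs) auto

lemma invc_sorted: "sorted_wrt (<) xs \<Longrightarrow> invc xs = 0"
proof (induction xs)
  case (Cons x ys)
  then have "filter (\<lambda>y. y < x) ys = []" by (auto simp: filter_empty_conv)
  then show ?case using Cons by simp
qed simp

lemma len_filter_sl: "finite A \<Longrightarrow> length (filter (\<lambda>y. y < a) (sorted_list_of_set A)) = card {b\<in>A. b < a}"
  by (subst distinct_length_filter) (auto intro: arg_cong[where f=card])

lemma card_split_lt_gt:
  assumes "finite A" "x \<notin> A"
  shows "card {a\<in>A. a < x} + card {a\<in>A. x < (a::nat)} = card A"
proof -
  have "A = {a\<in>A. a < x} \<union> {a\<in>A. x < a}" using assms(2) by auto (metis linorder_neqE_nat)
  moreover have "card ({a\<in>A. a < x} \<union> {a\<in>A. x < a}) = card {a\<in>A. a < x} + card {a\<in>A. x < a}"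
    by (rule card_Un_disjoint) (use assms(1) in auto)
  ultimately show ?thesis by simp
qed

lemma parity_main:
  assumes "distinct t" "finite S" "x \<in> S" "set t \<inter> S = {}"
  shows "invc (x # t @ sorted_list_of_set (S - {x})) + 2 * card {a\<in>set t. x < a}
       = card {b\<in>S. b < x} + invc t + (\<Sum>a\<in>set t. card {b\<in>S. b < a}) + length t"
proof -
  define Z where "Z = sorted_list_of_set (S - {x})"
  have h1: "invc (x # t @ Z) = length (filter (\<lambda>y. y < x) (t @ Z)) + invc t
      + (\<Sum>a\<leftarrow>t. length (filter (\<lambda>y. y < a) Z)) + invc Z"
    by (simp add: invc_append)
  have h2: "invc Z = 0" unfolding Z_def by (rule invc_sorted) simp
  have h3: "length (filter (\<lambda>y. y < x) (t @ Z)) = card {a\<in>set t. a < x} + card {b\<in>S. b < x}"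
  proof -
    have "length (filter (\<lambda>y. y < x) t) = card {a\<in>set t. a < x}"
      using assms(1) by (subst distinct_length_filter) (auto intro: arg_cong[where f=card])
    moreover have "length (filter (\<lambda>y. y < x) Z) = card {b\<in>S. b < x}"
      unfolding Z_def using assms(2) by (subst len_filter_sl) (auto intro: arg_cong[where f=card])
    ultimately show ?thesis by simp
  qed
  have h4: "(\<Sum>a\<leftarrow>t. length (filter (\<lambda>y. y < a) Z)) = (\<Sum>a\<in>set t. card {b\<in>S-{x}. b < a})"
    unfolding Z_def using assms by (simp add: sum_list_distinct_conv_sum_set len_filter_sl)
  have h5: "card {b\<in>S-{x}. b < a} + (if x < a then 1 else 0) = card {b\<in>S. b < a}" for a
  proof (cases "x < a")
    case True
    then have "{b\<in>S. b < a} = insert x {b\<in>S-{x}. b < a}" using assms(3) by auto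
    then show ?thesis using True assms(2) by simp
  next
    case False
    then have "{b\<in>S. b < a} = {b\<in>S-{x}. b < a}" by auto
    then show ?thesis using False by simp
  qed
  have h6: "(\<Sum>a\<in>set t. (if x < a then 1 else 0::nat)) = card {a\<in>set t. x < a}"
    by (simp add: sum.If_cases Int_def conj_commute)
  have h7: "card {a\<in>set t. a < x} + card {a\<in>set t. x < a} = length t"
    using card_split_lt_gt[of "set t" x] assms by (auto simp: distinct_card)
  have h8: "(\<Sum>a\<in>set t. card {b\<in>S-{x}. b < a}) + card {a\<in>set t. x < a} = (\<Sum>a\<in>set t. card {b\<in>S. b < a})"
    unfolding h6[symmetric] sum.distrib[symmetric] using h5 by simp
  show ?thesis using h1 h2 h3 h4 h7 h8 unfolding Z_def by linarith
qed


lemma cnt_even: "card {i. i < M \<and> even (i + K)} = (M + (if even K then 1 else 0)) div (2::nat)"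
proof (induction M)
  case (Suc M)
  have "{i. i < Suc M \<and> even (i + K)} = {i. i < M \<and> even (i + K)} \<union> (if even (M + K) then {M} else {})"
    by (auto simp: less_Suc_eq)
  then have "card {i. i < Suc M \<and> even (i + K)} = card {i. i < M \<and> even (i + K)} + (if even (M + K) then 1 else 0)"
    by auto
  then show ?case using Suc by simp
qed simp

lemma cnt_odd: "card {i. i < M \<and> odd (i + K)} = (M + (if odd K then 1 else 0)) div (2::nat)"
proof (induction M)
  case (Suc M)
  have "{i. i < Suc M \<and> odd (i + K)} = {i. i < M \<and> odd (i + K)} \<union> (if odd (M + K) then {M} else {})"
    by (auto simp: less_Suc_eq)
  then have "card {i. i < Suc M \<and> odd (i + K)} = card {i. i < M \<and> odd (i + K)} + (if odd (M + K) then 1 else 0)"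
    by auto
  then show ?case using Suc by simp
qed simp

lemma idx_card:
  assumes "sorted_wrt (<) L" "i < length (L::nat list)"
  shows "card {y\<in>set L. y < L!i} = i"
proof -
  have d: "distinct L" using assms(1) by (simp add: strict_sorted_iff)
  have "{y\<in>set L. y < L!i} = (!) L ` {..<i}"
  proof (rule set_eqI, rule iffI)
    fix y assume "y \<in> {y\<in>set L. y < L!i}"
    then obtain j where j: "j < length L" "y = L!j" "L!j < L!i" by (auto simp: in_set_conv_nth)
    have "j < i"
    proof (rule ccontr)
      assume "\<not> j < i"
      then have "i \<le> j" by simp
      then have "L!i \<le> L!j" using assms j sorted_wrt_nth_less[OF assms(1), of i j]
        by (cases "i = j") auto
      then show False using j by simp
    qed
    then show "y \<in> (!) L ` {..<i}" using j by auto
  next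
    fix y assume "y \<in> (!) L ` {..<i}"
    then obtain j where "j < i" "y = L!j" by auto
    then show "y \<in> {y\<in>set L. y < L!i}" using assms sorted_wrt_nth_less[OF assms(1), of j i] by auto
  qed
  moreover have "inj_on ((!) L) {..<i}" using d assms(2) by (auto simp: inj_on_def nth_eq_iff_index_eq)
  ultimately show ?thesis by (simp add: card_image)
qed


lemma arith_aux:
  fixes j m :: nat
  assumes "j < m + 1"
  shows "m div 2 \<le> (j + (if even j then 1 else 0)) div 2 + (m + 1 - j - 1 + 1) div 2"
proof (cases "even j")
  case True
  then obtain a where "j = 2 * a" by auto
  then show ?thesis using assms by simp
next
  case False
  then obtain a where "j = 2 * a + 1" using oddE by blast
  then show ?thesis using assms by simp
qed

lemma arith2:
  fixes m K :: nat
  shows "(odd m \<longrightarrow> (m + 1 + (if even K then 1 else 0)) div 2 = (m + 1 + (if odd K then 1 else 0)) div 2)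
    \<and> (even m \<longrightarrow> \<bar>int ((m + 1 + (if even K then 1 else 0)) div 2) - int ((m + 1 + (if odd K then 1 else 0)) div 2)\<bar> = 1)"
proof (cases "even m")
  case True
  then obtain a where "m = 2 * a" by auto
  then show ?thesis by (cases "even K") simp_all
next
  case False
  then obtain a where "m = 2 * a + 1" using oddE by blast
  then show ?thesis by (cases "even K") simp_all
qed

theorem proposition1:
  fixes n k :: nat and v :: "nat list"
  assumes "3 \<le> k" and "k < n" and "star_vertex n k v"
  defines "nE \<equiv> card {u \<in> fund_clique n v. even_signed n u}"
      and "nO \<equiv> card {u \<in> fund_clique n v. \<not> even_signed n u}"
  shows "(odd (n - k) \<longrightarrow> nE = nO)
       \<and> (even (n - k) \<longrightarrow> \<bar>int nE - int nO\<bar> = 1)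
       \<and> card (out_nbrs_in_clique n v) \<ge> (n - k) div 2"
proof -
  define t where "t = tl v"
  define h where "h = hd v"
  have v: "v = h # t" using assms(1,3) unfolding star_vertex_def h_def t_def
    by (cases v) auto
  have dt: "distinct t" and ht: "h \<notin> set t" and hn: "h \<in> {1..n}" and tn: "set t \<subseteq> {1..n}"
    and lt: "length t = k - 1"
    using assms(3) unfolding star_vertex_def v by auto
  define S where "S = {1..n} - set t"
  have fS: "finite S" unfolding S_def by simp
  have hS: "h \<in> S" unfolding S_def using hn ht by simp
  have tS: "set t \<inter> S = {}" unfolding S_def by auto
  have cS: "card S = n - k + 1"
  proof -
    have "card S = card {1..n} - card (set t)" unfolding S_def using tn by (simp add: card_Diff_subset)
    then show ?thesis using lt dt assms(1,2) by (simp add: distinct_card)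
  qed
  define L where "L = sorted_list_of_set S"
  have sL: "sorted_wrt (<) L" unfolding L_def by simp
  have setL: "set L = S" unfolding L_def using fS by simp
  have dL: "distinct L" unfolding L_def by simp
  define M where "M = length L"
  have M: "M = n - k + 1" unfolding M_def L_def using cS by simp
  define K where "K = invc t + (\<Sum>a\<in>set t. card {b\<in>S. b < a}) + length t"
  have ext: "ext_label n (x # t) = x # t @ sorted_list_of_set (S - {x})" for x
  proof -
    have "{1..n} - set (x # t) = S - {x}" unfolding S_def by auto
    then show ?thesis unfolding ext_label_def by simp
  qed
  have sign: "even_signed n (L!i # t) \<longleftrightarrow> even (i + K)" if "i < M" for i
  proof -
    have xS: "L!i \<in> S" using that setL unfolding M_def by (metis nth_mem)
    have "card {b\<in>S. b < L!i} = i" using idx_card[OF sL, of i] that setL unfolding M_def by simp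
    then have "invc (ext_label n (L!i # t)) + 2 * card {a\<in>set t. L!i < a} = i + K"
      unfolding ext K_def using parity_main[OF dt fS xS tS] by simp
    then show ?thesis unfolding even_signed_def inversions_invc
      by (metis dvd_add_left_iff dvd_triv_left)
  qed
  have hdext: "hd (ext_label n (x # t)) = x" for x unfolding ext_label_def by simp
  define f where "f = (\<lambda>i. L!i # t)"
  have finj: "inj_on f {..<M}" unfolding f_def M_def using dL by (auto simp: inj_on_def nth_eq_iff_index_eq)
  have SL: "S = (!) L ` {..<M}" unfolding M_def using setL by (auto simp: set_conv_nth image_def)
  have fc: "fund_clique n v = f ` {..<M}"
  proof -
    have "fund_clique n v = (\<lambda>x. x # t) ` S" unfolding fund_clique_def v S_def by auto
    then show ?thesis unfolding SL f_def by auto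
  qed
  have eqE: "{u \<in> fund_clique n v. even_signed n u} = f ` {i. i < M \<and> even (i + K)}"
    unfolding fc using sign by (auto simp: f_def)
  have nE: "nE = (M + (if even K then 1 else 0)) div 2" 
  proof -
    have "card (f ` {i. i < M \<and> even (i + K)}) = card {i. i < M \<and> even (i + K)}"
      by (rule card_image, rule inj_on_subset[OF finj]) auto
    then show ?thesis unfolding nE_def eqE using cnt_even by simp
  qed
  have eqO: "{u \<in> fund_clique n v. \<not> even_signed n u} = f ` {i. i < M \<and> odd (i + K)}"
    unfolding fc using sign by (auto simp: f_def)
  have nO: "nO = (M + (if odd K then 1 else 0)) div 2" 
  proof -
    have "card (f ` {i. i < M \<and> odd (i + K)}) = card {i. i < M \<and> odd (i + K)}"
      by (rule card_image, rule inj_on_subset[OF finj]) auto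
    then show ?thesis unfolding nO_def eqO using cnt_odd by simp
  qed
  have part1: "(odd (n - k) \<longrightarrow> nE = nO) \<and> (even (n - k) \<longrightarrow> \<bar>int nE - int nO\<bar> = 1)"
    unfolding nE nO M using arith2[of "n - k" K] by simp
  obtain j where j: "j < M" "h = L!j" using hS unfolding SL by auto
  have vj: "v = f j" unfolding v f_def j ..
  define I1 where "I1 = {i. i < j \<and> even (i + j)}"
  define I2 where "I2 = {i. j < i \<and> i < M \<and> odd (i + j)}"
  have sub: "f ` (I1 \<union> I2) \<subseteq> out_nbrs_in_clique n v"
  proof
    fix w assume "w \<in> f ` (I1 \<union> I2)"
    then obtain i where i: "i \<in> I1 \<union> I2" "w = f i" by auto
    have iM: "i < M" "i \<noteq> j" using i(1) j(1) unfolding I1_def I2_def by auto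
    have ne: "w \<noteq> v" unfolding vj i(2) using finj iM j(1) by (auto dest: inj_onD)
    have arc: "clique_arc n v w"
    proof (cases "i \<in> I1")
      case True
      then have "even_signed n v = even_signed n w" "L!i < L!j"
        unfolding vj i(2) f_def using sign[of i] sign[of j] iM j(1) I1_def
          sorted_wrt_nth_less[OF sL, of i j] M_def by auto
      then show ?thesis unfolding clique_arc_def vj i(2) f_def hdext by simp
    next
      case False
      then have "i \<in> I2" using i(1) by simp
      then have "even_signed n v \<noteq> even_signed n w" "L!j < L!i"
        unfolding vj i(2) f_def using sign[of i] sign[of j] iM j(1) I2_def
          sorted_wrt_nth_less[OF sL, of j i] M_def by auto
      then show ?thesis unfolding clique_arc_def vj i(2) f_def hdext by auto
    qed
    have "w \<in> fund_clique n v" unfolding fc i(2) using iM by simp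
    then show "w \<in> out_nbrs_in_clique n v" unfolding out_nbrs_in_clique_def using ne arc by simp
  qed
  have fin: "finite (out_nbrs_in_clique n v)"
    by (rule finite_subset[of _ "fund_clique n v"]) (auto simp: out_nbrs_in_clique_def fc)
  have c1: "card I1 = (j + (if even j then 1 else 0)) div 2" unfolding I1_def using cnt_even[of j j] by simp
  have I2eq: "I2 = (\<lambda>d. j + 1 + d) ` {d. d < M - j - 1 \<and> even (d + 0)}"
  proof (rule set_eqI, rule iffI)
    fix i assume "i \<in> I2"
    then have "i = j + 1 + (i - j - 1)" "i - j - 1 < M - j - 1" "even (i - j - 1 + 0)"
      unfolding I2_def by auto
    then show "i \<in> (\<lambda>d. j + 1 + d) ` {d. d < M - j - 1 \<and> even (d + 0)}" by blast
  next
    fix i assume "i \<in> (\<lambda>d. j + 1 + d) ` {d. d < M - j - 1 \<and> even (d + 0)}"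
    then show "i \<in> I2" unfolding I2_def by auto
  qed
  have c2: "card I2 = (M - j - 1 + 1) div 2"
    unfolding I2eq by (subst card_image) (auto simp: inj_on_def cnt_even[of _ 0, simplified])
  have "card (I1 \<union> I2) = card I1 + card I2"
    by (rule card_Un_disjoint) (auto simp: I1_def I2_def)
  moreover have "card (f ` (I1 \<union> I2)) = card (I1 \<union> I2)"
    by (rule card_image, rule inj_on_subset[OF finj]) (use j(1) in \<open>auto simp: I1_def I2_def\<close>)
  ultimately have "card (out_nbrs_in_clique n v) \<ge> card I1 + card I2"
    using card_mono[OF fin sub] by simp
  then have part2: "card (out_nbrs_in_clique n v) \<ge> (n - k) div 2"
    unfolding c1 c2 using j(1) M arith_aux[of j "n - k"] by simp
  show ?thesis using part1 part2 by blast
qed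

end
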